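(* Let $B$ be a regular ROBP of length $n$ and width $w$, where $n\ge2$ is a power of $2$, with random walk matrices $\mathbf{M}_i$ and $\mathbf{M}_{\ell..r}$ as in the context. Let $0<\gamma<1/2$ and $\varepsilon^{(i)}=\frac{\gamma^{i+1}}{10(i+1)^2\log(n)}$ for integers $i\ge0$. For every $(\ell,r)\in\mathsf{BS}_n$ let $\mathbf{M}^{(0)}_{\ell..r}$ be an $(\varepsilon^{(0)}/3)$-SV approximation of $\mathbf{M}_{\ell..r}$, and define $\mathbf{M}^{(k)}_{\ell..r}$ by the recursion in the context. Then for every integer $k\ge0$ and every $(\ell,r)\in\mathsf{BS}_n$, $\mathbf{M}^{(k)}_{\ell..r}$ is a $C_t\varepsilon^{(k)}$-SV approximation of $\mathbf{M}_{\ell..r}$, where $t=\log(r-\ell)$ and $C_t=(1+1/\log(n))^t/3$.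
   Context: Logarithms are base $2$. A ROBP of length $n$ and width $w$ is given by transition functions $B_i:[w]\times\{0,1\}\to[w]$, $i\in[n]$; it is regular if for every $i$ every $v\in[w]$ has exactly two preimages $(u,b)$ under $B_i$. $\mathbf{M}_i(b)[u,v]=1$ if $B_i(u,b)=v$ and $0$ otherwise; $\mathbf{M}_i=\frac12(\mathbf{M}_i(0)+\mathbf{M}_i(1))$ (doubly stochastic by regularity); $\mathbf{M}_{\ell..r}=\prod_{i=\ell+1}^r\mathbf{M}_i$. $\mathsf{BS}_n=\{(\ell,r):\exists i,k\ge 0,\ \ell=i2^k,\ r=\ell+2^k,\ 0\le\ell<r\le n\}$. Recursion: for $(\ell,r)\in\mathsf{BS}_n$ with $r-\ell=1$ and $k\ge1$, $\mathbf{M}^{(k)}_{\ell..r}=\mathbf{M}_r$; for $r-\ell\ge2$ and $k\ge1$, with $m=(\ell+r)/2$, $\mathbf{M}^{(k)}_{\ell..r}=\sum_{i+j=k}\mathbf{M}^{(i)}_{\ell..m}\mathbf{M}^{(j)}_{m..r}-\sum_{i+j=k-1}\mathbf{M}^{(i)}_{\ell..m}\mathbf{M}^{(j)}_{m..r}$ (sums over integers $i,j\ge0$). For $\mathbf{A}\in\mathbb{R}^{w\times w}$, $y\in\mathbb{R}^w$, let $D(\mathbf{A},y)=\|y\|_2^2-\|\mathbf{A}y\|_2^2$. For a doubly stochastic $\mathbf{W}$, a (not necessarily stochastic) matrix $\widetilde{\mathbf{W}}$ is an $\varepsilon$-SV approximation of $\mathbf{W}$ if for all $x,y\in\mathbb{R}^w$,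 $|x^\top(\widetilde{\mathbf{W}}-\mathbf{W})y|\le\varepsilon\cdot\frac{D(\mathbf{W}^\top,x)+D(\mathbf{W},y)}{2}$. *)

theory Defs
  imports "HOL-Analysis.Analysis"
begin

text \<open>A ROBP of length n and width given by the finite type 'w: transition functions
  B i :: 'w => bool => 'w for i in {1..n} (bits 0/1 rendered as False/True).\<close>

definition regular_robp :: "nat \<Rightarrow> (nat \<Rightarrow> 'w::finite \<Rightarrow> bool \<Rightarrow> 'w) \<Rightarrow> bool" where
  "regular_robp n B \<longleftrightarrow> (\<forall>i\<in>{1..n}. \<forall>v. card {(u, b). B i u b = v} = 2)"

definition Mbit :: "(nat \<Rightarrow> 'w::finite \<Rightarrow> bool \<Rightarrow> 'w) \<Rightarrow> nat \<Rightarrow> bool \<Rightarrow> real^'w^'w" where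
  "Mbit B i b = (\<chi> u v. if B i u b = v then 1 else 0)"

definition Mstep :: "(nat \<Rightarrow> 'w::finite \<Rightarrow> bool \<Rightarrow> 'w) \<Rightarrow> nat \<Rightarrow> real^'w^'w" where
  "Mstep B i = (1/2) *\<^sub>R (Mbit B i False + Mbit B i True)"

text \<open>M_{l..r} = M_{l+1} M_{l+2} ... M_r (ordered product).\<close>
definition Mrange :: "(nat \<Rightarrow> 'w::finite \<Rightarrow> bool \<Rightarrow> 'w) \<Rightarrow> nat \<Rightarrow> nat \<Rightarrow> real^'w^'w" where
  "Mrange B l r = foldl (\<lambda>A i. A ** Mstep B i) (mat 1) [Suc l..<Suc r]"

definition BS :: "nat \<Rightarrow> (nat \<times> nat) set" where
  "BS n = {(l, r). \<exists>i k. l = i * 2 ^ k \<and> r = l + 2 ^ k \<and> l < r \<and> r \<le> n}"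

text \<open>The recursion; the case r - l = 0 never occurs for (l,r) in BS n and is arbitrary.\<close>
function approxM :: "(nat \<Rightarrow> nat \<Rightarrow> real^'w^'w) \<Rightarrow> (nat \<Rightarrow> 'w::finite \<Rightarrow> bool \<Rightarrow> 'w)
    \<Rightarrow> nat \<Rightarrow> nat \<Rightarrow> nat \<Rightarrow> real^'w^'w" where
  "approxM M0 B k l r =
     (if k = 0 then M0 l r
      else if r \<le> Suc l then Mstep B r
      else (let m = (l + r) div 2 in
              (\<Sum>i\<le>k. approxM M0 B i l m ** approxM M0 B (k - i) m r)
            - (\<Sum>i\<le>k - 1. approxM M0 B i l m ** approxM M0 B (k - 1 - i) m r)))"
  by pat_completeness auto
termination
  by (relation "Wellfounded.measure (\<lambda>(M0, B, k, l, r). r - l)") auto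

definition Dq :: "real^'w^'w \<Rightarrow> real^'w \<Rightarrow> real" where
  "Dq A y = (norm y)\<^sup>2 - (norm (A *v y))\<^sup>2"

definition sv_approx :: "real \<Rightarrow> real^'w^'w \<Rightarrow> real^'w^'w \<Rightarrow> bool" where
  "sv_approx eps W Wt \<longleftrightarrow>
     (\<forall>x y. \<bar>x \<bullet> ((Wt - W) *v y)\<bar> \<le> eps * (Dq (transpose W) x + Dq W y) / 2)"

definition epsi :: "real \<Rightarrow> nat \<Rightarrow> nat \<Rightarrow> real" where
  "epsi \<gamma> n i = \<gamma> ^ (i + 1) / (10 * (real i + 1)^2 * log 2 (real n))"

definition Ct :: "nat \<Rightarrow> real \<Rightarrow> real" where
  "Ct n t = (1 + 1 / log 2 (real n)) powr t / 3"

end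

theory Submission
  imports Defs
begin

definition dstoch :: "real^'w::finite^'w \<Rightarrow> bool" where
  "dstoch A \<longleftrightarrow> (\<forall>i j. A$i$j \<ge> 0) \<and> (\<forall>i. (\<Sum>j\<in>UNIV. A$i$j) = 1) \<and> (\<forall>j. (\<Sum>i\<in>UNIV. A$i$j) = 1)"

lemma dstoch_id: "dstoch (mat 1 :: real^'w::finite^'w)"
  unfolding dstoch_def by (auto simp: mat_def if_distrib sum.delta cong: if_cong)

lemma dstoch_transpose: "dstoch A \<Longrightarrow> dstoch (transpose A)"
  unfolding dstoch_def transpose_def by auto

lemma dstoch_mult:
  fixes A B :: "real^'w::finite^'w"
  assumes "dstoch A" "dstoch B" shows "dstoch (A ** B)"
proof -
  have rows: "(\<Sum>k\<in>UNIV. (A ** B)$i$k) = 1" for i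
  proof -
    have "(\<Sum>k\<in>UNIV. (A ** B)$i$k) = (\<Sum>k\<in>UNIV. \<Sum>j\<in>UNIV. A$i$j * B$j$k)"
      by (simp add: matrix_matrix_mult_def)
    also have "\<dots> = (\<Sum>j\<in>UNIV. A$i$j * (\<Sum>k\<in>UNIV. B$j$k))"
      by (subst sum.swap) (simp add: sum_distrib_left)
    also have "\<dots> = 1" using assms by (simp add: dstoch_def)
    finally show ?thesis .
  qed
  have cols: "(\<Sum>i\<in>UNIV. (A ** B)$i$k) = 1" for k
  proof -
    have "(\<Sum>i\<in>UNIV. (A ** B)$i$k) = (\<Sum>i\<in>UNIV. \<Sum>j\<in>UNIV. A$i$j * B$j$k)"
      by (simp add: matrix_matrix_mult_def)
    also have "\<dots> = (\<Sum>j\<in>UNIV. (\<Sum>i\<in>UNIV. A$i$j) * B$j$k)"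
      by (subst sum.swap) (simp add: sum_distrib_right)
    also have "\<dots> = 1" using assms by (simp add: dstoch_def)
    finally show ?thesis .
  qed
  have "(A ** B)$i$k \<ge> 0" for i k
    using assms unfolding dstoch_def matrix_matrix_mult_def by (auto intro!: sum_nonneg)
  then show ?thesis using rows cols unfolding dstoch_def by auto
qed

lemma convex_sq:
  fixes a y :: "'i \<Rightarrow> real"
  assumes "finite S" "\<forall>j\<in>S. a j \<ge> 0" "sum a S = 1"
  shows "(\<Sum>j\<in>S. a j * y j)^2 \<le> (\<Sum>j\<in>S. a j * (y j)^2)"
proof -
  define m where "m = (\<Sum>j\<in>S. a j * y j)"
  have "0 \<le> (\<Sum>j\<in>S. a j * (y j - m)^2)"
    using assms by (intro sum_nonneg) auto
  also have "\<dots> = (\<Sum>j\<in>S. a j * (y j)^2) - 2 * m * (\<Sum>j\<in>S. a j * y j) + m^2 * sum a S"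
    by (simp add: power2_diff algebra_simps sum.distrib sum_subtractf sum_distrib_left sum_distrib_right)
  finally show ?thesis using assms(3) unfolding m_def by (simp add: power2_eq_square)
qed

lemma dstoch_contr:
  fixes A :: "real^'w::finite^'w"
  assumes "dstoch A" shows "norm (A *v y) \<le> norm y"
proof -
  have "(norm (A *v y))^2 = (\<Sum>i\<in>UNIV. (\<Sum>j\<in>UNIV. A$i$j * y$j)^2)"
    by (simp only: power2_norm_eq_inner) (simp add: inner_vec_def matrix_vector_mult_def power2_eq_square)
  also have "\<dots> \<le> (\<Sum>i\<in>UNIV. \<Sum>j\<in>UNIV. A$i$j * (y$j)^2)"
    using assms unfolding dstoch_def by (intro sum_mono convex_sq) auto
  also have "\<dots> = (\<Sum>j\<in>UNIV. (\<Sum>i\<in>UNIV. A$i$j) * (y$j)^2)"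
    by (subst sum.swap) (simp add: sum_distrib_right)
  also have "\<dots> = (\<Sum>j\<in>UNIV. (y$j)^2)"
    using assms unfolding dstoch_def by simp
  also have "\<dots> = (norm y)^2"
    unfolding power2_norm_eq_inner inner_vec_def by (simp add: power2_eq_square)
  finally show ?thesis by (rule power2_le_imp_le) simp
qed

lemma Mstep_entry: "Mstep B i $ u $ v = ((if B i u False = v then 1 else 0) + (if B i u True = v then 1 else 0)) / 2"
  by (simp add: Mstep_def Mbit_def)

lemma card_pairs:
  fixes f :: "'w::finite \<Rightarrow> bool \<Rightarrow> 'w"
  shows "card {(u, b). f u b = v} = card {u. f u False = v} + card {u. f u True = v}"
proof -
  have "{(u, b). f u b = v} = (\<lambda>u. (u, False)) ` {u. f u False = v} \<union> (\<lambda>u. (u, True)) ` {u. f u True = v}"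
  proof (rule set_eqI)
    fix p :: "'w \<times> bool"
    show "p \<in> {(u, b). f u b = v} \<longleftrightarrow> p \<in> (\<lambda>u. (u, False)) ` {u. f u False = v} \<union> (\<lambda>u. (u, True)) ` {u. f u True = v}"
      by (cases p; cases "snd p") auto
  qed
  moreover have "card ((\<lambda>u. (u, False)) ` {u. f u False = v} \<union> (\<lambda>u. (u, True)) ` {u. f u True = v})
      = card {u. f u False = v} + card {u. f u True = v}"
    by (subst card_Un_disjoint) (auto simp: card_image inj_on_def)
  ultimately show ?thesis by simp
qed

lemma sum_ind: "(\<Sum>u\<in>(UNIV::'w::finite set). if P u then 1 else (0::real)) = real (card {u. P u})"
proof -
  have "(\<Sum>u\<in>(UNIV::'w set). if P u then 1 else (0::real)) = (\<Sum>u\<in>UNIV. of_bool (P u))"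
    by (intro sum.cong) auto
  also have "\<dots> = real (card {u. P u})" by simp
  finally show ?thesis .
qed

lemma dstoch_Mstep:
  fixes B :: "nat \<Rightarrow> 'w::finite \<Rightarrow> bool \<Rightarrow> 'w"
  assumes "regular_robp n B" "i \<in> {1..n}"
  shows "dstoch (Mstep B i)"
proof -
  have rows: "(\<Sum>v\<in>UNIV. Mstep B i $ u $ v) = 1" for u
  proof -
    have "(\<Sum>v\<in>UNIV. Mstep B i $ u $ v) = ((\<Sum>v\<in>UNIV. if B i u False = v then 1 else 0) + (\<Sum>v\<in>UNIV. if B i u True = v then 1 else 0)) / 2"
      unfolding Mstep_entry sum_divide_distrib[symmetric] sum.distrib by (rule refl)
    also have "\<dots> = 1" by simp
    finally show ?thesis .
  qed
  have cols: "(\<Sum>u\<in>UNIV. Mstep B i $ u $ v) = 1" for v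
  proof -
    have "(\<Sum>u\<in>UNIV. Mstep B i $ u $ v) = ((\<Sum>u\<in>UNIV. if B i u False = v then 1 else 0) + (\<Sum>u\<in>UNIV. if B i u True = v then 1 else 0)) / 2"
      unfolding Mstep_entry sum_divide_distrib[symmetric] sum.distrib by (rule refl)
    also have "\<dots> = (real (card {u. B i u False = v}) + real (card {u. B i u True = v})) / 2"
      by (simp only: sum_ind)
    also have "\<dots> = real (card {(u, b). B i u b = v}) / 2"
      by (simp add: card_pairs)
    also have "\<dots> = 1" using assms unfolding regular_robp_def by simp
    finally show ?thesis .
  qed
  have "Mstep B i $ u $ v \<ge> 0" for u v by (simp add: Mstep_entry)
  then show ?thesis unfolding dstoch_def using rows cols by blast
qed

lemma foldl_mult:
  fixes M :: "nat \<Rightarrow> real^'w::finite^'w" and X :: "real^'w^'w"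
  shows "foldl (\<lambda>A i. A ** M i) X xs = X ** foldl (\<lambda>A i. A ** M i) (mat 1) xs"
proof (induction xs arbitrary: X)
  case Nil then show ?case by simp
next
  case (Cons a xs)
  show ?case
    using Cons.IH[of "X ** M a"] Cons.IH[of "M a"] by (simp add: matrix_mul_assoc)
qed

lemma Mrange_split:
  assumes "l \<le> m" "m \<le> r"
  shows "Mrange B l r = Mrange B l m ** Mrange B m r"
proof -
  have "[Suc l..<Suc r] = [Suc l..<Suc m] @ [Suc m..<Suc r]"
    using assms upt_add_eq_append[of "Suc l" "Suc m" "r - m"] by simp
  then show ?thesis unfolding Mrange_def by (simp only: foldl_append) (rule foldl_mult)
qed

lemma Mrange_one: "Mrange B l (Suc l) = Mstep B (Suc l)"
  unfolding Mrange_def by simp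

lemma dstoch_Mrange:
  assumes "regular_robp n B" "r \<le> n"
  shows "dstoch (Mrange B l r)"
proof -
  have "\<forall>i\<in>set xs. i \<in> {1..n} \<Longrightarrow> dstoch X \<Longrightarrow> dstoch (foldl (\<lambda>A i. A ** Mstep B i) X xs)" for xs X
  proof (induction xs arbitrary: X)
    case Nil then show ?case by simp
  next
    case (Cons a xs)
    have "dstoch (X ** Mstep B a)"
      using Cons.prems by (intro dstoch_mult dstoch_Mstep[OF assms(1)]) auto
    then show ?case using Cons by simp
  qed
  moreover have "\<forall>i\<in>set [Suc l..<Suc r]. i \<in> {1..n}" using assms by auto
  ultimately show ?thesis unfolding Mrange_def using dstoch_id by blast
qed


lemma Dq_scale: "Dq A (c *\<^sub>R y) = c^2 * Dq A y"
  unfolding Dq_def by (simp add: matrix_vector_mult_scaleR power_mult_distrib algebra_simps)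

lemma Dq_le: "Dq A y \<le> (norm y)^2"
  unfolding Dq_def by simp

lemma Dq_nonneg: "dstoch A \<Longrightarrow> Dq A y \<ge> 0"
  unfolding Dq_def using dstoch_contr[of A y] by (simp add: power_mono)

lemma Dq_nonneg_T: "dstoch A \<Longrightarrow> Dq (transpose A) y \<ge> 0"
  using Dq_nonneg dstoch_transpose by blast

lemma Dq_mult: "Dq (A ** B) y = Dq B y + Dq A (B *v y)"
  unfolding Dq_def by (simp add: matrix_vector_mul_assoc[symmetric])

lemma Dq_mult_T: "Dq (transpose (A ** B)) x = Dq (transpose A) x + Dq (transpose B) (transpose A *v x)"
  unfolding Dq_def by (simp add: vector_matrix_mul_assoc[symmetric])

lemma sv_scale:
  assumes "sv_approx e W W'" "a \<noteq> 0"
  shows "\<bar>x \<bullet> ((W' - W) *v y)\<bar> \<le> e * (a^2 * Dq (transpose W) x + Dq W y / a^2) / 2"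
proof -
  have "\<bar>(a *\<^sub>R x) \<bullet> ((W' - W) *v ((1/a) *\<^sub>R y))\<bar> \<le> e * (Dq (transpose W) (a *\<^sub>R x) + Dq W ((1/a) *\<^sub>R y)) / 2"
    using assms(1) unfolding sv_approx_def by blast
  moreover have "(a *\<^sub>R x) \<bullet> ((W' - W) *v ((1/a) *\<^sub>R y)) = x \<bullet> ((W' - W) *v y)"
    using assms(2) by (simp add: matrix_vector_mult_scaleR)
  moreover have "Dq (transpose W) (a *\<^sub>R x) + Dq W ((1/a) *\<^sub>R y) = a^2 * Dq (transpose W) x + Dq W y / a^2"
    by (simp only: Dq_scale) (simp add: power_divide)
  ultimately show ?thesis by simp
qed

lemma u_bound:
  assumes "sv_approx e A A'" "e > 0"
  shows "(norm (transpose (A' - A) *v x))^2 \<le> e^2 * Dq (transpose A) x"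
proof -
  define u where "u = transpose (A' - A) *v x"
  have "(norm u)^2 = u \<bullet> u" by (simp add: power2_norm_eq_inner)
  also have "\<dots> = x \<bullet> ((A' - A) *v u)"
    unfolding u_def by (simp add: dot_lmul_matrix)
  also have "\<dots> \<le> \<bar>x \<bullet> ((A' - A) *v u)\<bar>" by simp
  also have "\<dots> \<le> e * ((sqrt e)^2 * Dq (transpose A) x + Dq A u / (sqrt e)^2) / 2"
    using sv_scale[OF assms(1), of "sqrt e" x u] assms(2) by simp
  also have "\<dots> = (e^2 * Dq (transpose A) x + Dq A u) / 2"
    using assms(2) by (simp add: power2_eq_square field_simps)
  also have "\<dots> \<le> (e^2 * Dq (transpose A) x + (norm u)^2) / 2"
    using Dq_le[of A u] by simp
  finally show ?thesis unfolding u_def by simp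
qed

lemma cross_bound:
  assumes "sv_approx a A A'" "a > 0" "sv_approx b B B'" "b > 0"
  shows "\<bar>x \<bullet> ((A' - A) *v ((B' - B) *v y))\<bar> \<le> a * b * (Dq (transpose A) x + Dq B y) / 2"
proof -
  define u where "u = transpose (A' - A) *v x"
  have "x \<bullet> ((A' - A) *v ((B' - B) *v y)) = u \<bullet> ((B' - B) *v y)"
    unfolding u_def by (simp add: dot_lmul_matrix)
  moreover have "\<bar>u \<bullet> ((B' - B) *v y)\<bar> \<le> b * ((sqrt (1/a))^2 * Dq (transpose B) u + Dq B y / (sqrt (1/a))^2) / 2"
    using sv_scale[OF assms(3), of "sqrt (1/a)" u y] assms(2) by simp
  moreover have "(sqrt (1/a))^2 * Dq (transpose B) u \<le> (1/a) * (a^2 * Dq (transpose A) x)"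
  proof -
    have "Dq (transpose B) u \<le> (norm u)^2" by (rule Dq_le)
    also have "\<dots> \<le> a^2 * Dq (transpose A) x" unfolding u_def by (rule u_bound[OF assms(1,2)])
    finally show ?thesis using assms(2) by (simp add: divide_right_mono)
  qed
  moreover have "(1/a) * (a^2 * Dq (transpose A) x) = a * Dq (transpose A) x"
    using assms(2) by (simp add: power2_eq_square)
  moreover have "Dq B y / (sqrt (1/a))^2 = a * Dq B y"
    using assms(2) by simp
  ultimately have "\<bar>x \<bullet> ((A' - A) *v ((B' - B) *v y))\<bar> \<le> b * (a * Dq (transpose A) x + a * Dq B y) / 2"
    using assms(4) by (smt (verit, ccfv_SIG) divide_right_mono mult_left_mono)
  then show ?thesis by (simp add: algebra_simps)
qed

lemma sv_mono:
  assumes "sv_approx e W W'" "e \<le> e'" "dstoch W"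
  shows "sv_approx e' W W'"
  unfolding sv_approx_def
proof (intro allI)
  fix x y
  have "0 \<le> Dq (transpose W) x + Dq W y" using Dq_nonneg[OF assms(3)] Dq_nonneg_T[OF assms(3)] by (simp add: add_nonneg_nonneg)
  then have "e * (Dq (transpose W) x + Dq W y) / 2 \<le> e' * (Dq (transpose W) x + Dq W y) / 2"
    using assms(2) by (simp add: mult_right_mono divide_right_mono)
  then show "\<bar>x \<bullet> ((W' - W) *v y)\<bar> \<le> e' * (Dq (transpose W) x + Dq W y) / 2"
    using assms(1) unfolding sv_approx_def by (meson order_trans)
qed

lemma sum_mv: "finite S \<Longrightarrow> (\<Sum>i\<in>S. P i) *v y = (\<Sum>i\<in>S. P i *v (y::real^'w::finite))"
  by (induction S rule: finite_induct) (auto simp: matrix_vector_mult_add_rdistrib)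

lemma sum_rev_atMost: "(\<Sum>i\<le>k. f (k - i)) = (\<Sum>i\<le>(k::nat). (f i :: real))"
  by (rule sum.reindex_bij_witness[where i="\<lambda>i. k - i" and j="\<lambda>i. k - i"]) auto


lemma step_lemma:
  fixes A B :: "real^'w::finite^'w" and Af Bf :: "nat \<Rightarrow> real^'w^'w" and a b :: "nat \<Rightarrow> real"
  assumes dA: "dstoch A" and dB: "dstoch B"
    and sA: "\<And>i. i \<le> Suc k' \<Longrightarrow> sv_approx (a i) A (Af i) \<and> a i > 0"
    and sB: "\<And>i. i \<le> Suc k' \<Longrightarrow> sv_approx (b i) B (Bf i) \<and> b i > 0"
  shows "sv_approx (max (a (Suc k')) (b (Suc k')) + (\<Sum>i\<le>Suc k'. a i * b (Suc k' - i)) + (\<Sum>i\<le>k'. a i * b (k' - i)))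
           (A ** B) ((\<Sum>i\<le>Suc k'. Af i ** Bf (Suc k' - i)) - (\<Sum>i\<le>k'. Af i ** Bf (k' - i)))"
  unfolding sv_approx_def
proof (intro allI)
  fix x y :: "real^'w"
  let ?k = "Suc k'"
  define dA where "dA i = Af i - A" for i
  define dB where "dB j = Bf j - B" for j
  define c0 where "c0 = x \<bullet> (A *v (B *v y))"
  define p where "p j = x \<bullet> (A *v (dB j *v y))" for j
  define q where "q i = x \<bullet> (dA i *v (B *v y))" for i
  define r where "r i j = x \<bullet> (dA i *v (dB j *v y))" for i j
  define M where "M = (\<Sum>i\<le>?k. Af i ** Bf (?k - i)) - (\<Sum>i\<le>k'. Af i ** Bf (k' - i))"
  have e: "x \<bullet> ((Af i ** Bf j) *v y) = c0 + p j + q i + r i j" for i j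
  proof -
    have "Af i = A + dA i" "Bf j = B + dB j" by (simp_all add: dA_def dB_def)
    then show ?thesis
      unfolding c0_def p_def q_def r_def matrix_vector_mul_assoc[symmetric]
      by (simp add: matrix_vector_mult_add_rdistrib matrix_vector_right_distrib inner_add_right)
  qed
  have lin: "x \<bullet> ((\<Sum>i\<in>S. P i) *v y) = (\<Sum>i\<in>S. x \<bullet> (P i *v y))" if "finite S" for S and P :: "nat \<Rightarrow> real^'w^'w"
    using that by (simp add: sum_mv inner_sum_right)
  have s1: "x \<bullet> ((\<Sum>i\<le>?k. Af i ** Bf (?k - i)) *v y) = (\<Sum>i\<le>?k. c0 + p (?k - i) + q i + r i (?k - i))"
    by (simp only: lin[OF finite_atMost] e)
  have s2: "x \<bullet> ((\<Sum>i\<le>k'. Af i ** Bf (k' - i)) *v y) = (\<Sum>i\<le>k'. c0 + p (k' - i) + q i + r i (k' - i))"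
    by (simp only: lin[OF finite_atMost] e)
  have pr1: "(\<Sum>i\<le>?k. p (?k - i)) = (\<Sum>i\<le>?k. p i)" by (rule sum_rev_atMost)
  have pr2: "(\<Sum>i\<le>k'. p (k' - i)) = (\<Sum>i\<le>k'. p i)" by (rule sum_rev_atMost)
  have main: "x \<bullet> ((M - A ** B) *v y) = p ?k + q ?k + (\<Sum>i\<le>?k. r i (?k - i)) - (\<Sum>i\<le>k'. r i (k' - i))"
  proof -
    have "x \<bullet> ((M - A ** B) *v y) = x \<bullet> ((\<Sum>i\<le>?k. Af i ** Bf (?k - i)) *v y) - x \<bullet> ((\<Sum>i\<le>k'. Af i ** Bf (k' - i)) *v y) - c0"
      unfolding M_def c0_def by (simp add: matrix_vector_mult_diff_rdistrib inner_diff_right matrix_vector_mul_assoc)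
    also have "\<dots> = (\<Sum>i\<le>?k. c0 + p (?k - i) + q i + r i (?k - i)) - (\<Sum>i\<le>k'. c0 + p (k' - i) + q i + r i (k' - i)) - c0"
      by (simp only: s1 s2)
    also have "\<dots> = p ?k + q ?k + (\<Sum>i\<le>?k. r i (?k - i)) - (\<Sum>i\<le>k'. r i (k' - i))"
      unfolding sum.distrib pr1 pr2
      by (simp only: sum.atMost_Suc[of p k'] sum.atMost_Suc[of q k'] sum_constant card_atMost) (simp add: algebra_simps)
    finally show ?thesis .
  qed
  define Da1 where "Da1 = Dq (transpose A) x"
  define Db1 where "Db1 = Dq (transpose B) (transpose A *v x)"
  define Db2 where "Db2 = Dq B y"
  define Da2 where "Da2 = Dq A (B *v y)"
  have nn: "Da1 \<ge> 0" "Db1 \<ge> 0" "Db2 \<ge> 0" "Da2 \<ge> 0"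
    unfolding Da1_def Db1_def Db2_def Da2_def using Dq_nonneg[OF dA] Dq_nonneg[OF dB] Dq_nonneg_T[OF dA] Dq_nonneg_T[OF dB]
    by blast+
  define D where "D = Dq (transpose (A ** B)) x + Dq (A ** B) y"
  have D_eq: "D = Da1 + Db1 + Db2 + Da2"
    unfolding D_def Da1_def Db1_def Db2_def Da2_def Dq_mult Dq_mult_T by simp
  define m where "m = max (a ?k) (b ?k)"
  have ak: "sv_approx (a ?k) A (Af ?k)" "a ?k > 0" using sA[of ?k] by auto
  have bk: "sv_approx (b ?k) B (Bf ?k)" "b ?k > 0" using sB[of ?k] by auto
  have pk: "\<bar>p ?k\<bar> \<le> b ?k * (Db1 + Db2) / 2"
  proof -
    have "p ?k = (transpose A *v x) \<bullet> ((Bf ?k - B) *v y)"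
      unfolding p_def dB_def by (simp add: dot_lmul_matrix)
    then show ?thesis using bk(1) unfolding sv_approx_def Db1_def Db2_def by simp
  qed
  have qk: "\<bar>q ?k\<bar> \<le> a ?k * (Da1 + Da2) / 2"
    using ak(1) unfolding sv_approx_def q_def dA_def Da1_def Da2_def by simp
  have pq: "\<bar>p ?k\<bar> + \<bar>q ?k\<bar> \<le> m * D / 2"
  proof -
    have "b ?k * (Db1 + Db2) \<le> m * (Db1 + Db2)" unfolding m_def using nn by (intro mult_right_mono) auto
    moreover have "a ?k * (Da1 + Da2) \<le> m * (Da1 + Da2)" unfolding m_def using nn by (intro mult_right_mono) auto
    ultimately show ?thesis using pk qk unfolding D_eq by (simp add: algebra_simps)
  qed
  have rb: "\<bar>r i j\<bar> \<le> a i * b j * D / 2" if "i \<le> ?k" "j \<le> ?k" for i j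
  proof -
    have "\<bar>r i j\<bar> \<le> a i * b j * (Da1 + Db2) / 2"
      unfolding r_def dA_def dB_def Da1_def Db2_def
      using sA[OF that(1)] sB[OF that(2)] by (intro cross_bound) auto
    also have "\<dots> \<le> a i * b j * D / 2"
      using sA[OF that(1)] sB[OF that(2)] nn unfolding D_eq
      by (intro divide_right_mono mult_left_mono) auto
    finally show ?thesis .
  qed
  have R1: "\<bar>\<Sum>i\<le>?k. r i (?k - i)\<bar> \<le> (\<Sum>i\<le>?k. a i * b (?k - i)) * D / 2"
  proof -
    have "\<bar>\<Sum>i\<le>?k. r i (?k - i)\<bar> \<le> (\<Sum>i\<le>?k. \<bar>r i (?k - i)\<bar>)" by (rule sum_abs)
    also have "\<dots> \<le> (\<Sum>i\<le>?k. a i * b (?k - i) * D / 2)" by (intro sum_mono rb) auto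
    also have "\<dots> = (\<Sum>i\<le>?k. a i * b (?k - i)) * D / 2" by (simp only: sum_distrib_right[symmetric] sum_divide_distrib[symmetric])
    finally show ?thesis .
  qed
  have R2: "\<bar>\<Sum>i\<le>k'. r i (k' - i)\<bar> \<le> (\<Sum>i\<le>k'. a i * b (k' - i)) * D / 2"
  proof -
    have "\<bar>\<Sum>i\<le>k'. r i (k' - i)\<bar> \<le> (\<Sum>i\<le>k'. \<bar>r i (k' - i)\<bar>)" by (rule sum_abs)
    also have "\<dots> \<le> (\<Sum>i\<le>k'. a i * b (k' - i) * D / 2)" by (intro sum_mono rb) auto
    also have "\<dots> = (\<Sum>i\<le>k'. a i * b (k' - i)) * D / 2" by (simp only: sum_distrib_right[symmetric] sum_divide_distrib[symmetric])
    finally show ?thesis .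
  qed
  have "\<bar>x \<bullet> ((M - A ** B) *v y)\<bar> \<le> (m + (\<Sum>i\<le>?k. a i * b (?k - i)) + (\<Sum>i\<le>k'. a i * b (k' - i))) * D / 2"
  proof -
    have tri: "\<bar>P + Q + R - S\<bar> \<le> \<bar>P\<bar> + \<bar>Q\<bar> + \<bar>R\<bar> + \<bar>S\<bar>" for P Q R S :: real by arith
    have "(m + (\<Sum>i\<le>?k. a i * b (?k - i)) + (\<Sum>i\<le>k'. a i * b (k' - i))) * D / 2
       = m * D / 2 + (\<Sum>i\<le>?k. a i * b (?k - i)) * D / 2 + (\<Sum>i\<le>k'. a i * b (k' - i)) * D / 2"
      by (simp add: algebra_simps add_divide_distrib)
    then show ?thesis unfolding main
      using tri[of "p ?k" "q ?k" "\<Sum>i\<le>?k. r i (?k - i)" "\<Sum>i\<le>k'. r i (k' - i)"] pq R1 R2 by linarith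
  qed
  then show "\<bar>x \<bullet> ((M - A ** B) *v y)\<bar> \<le> (max (a ?k) (b ?k) + (\<Sum>i\<le>?k. a i * b (?k - i)) + (\<Sum>i\<le>k'. a i * b (k' - i))) *
          (Dq (transpose (A ** B)) x + Dq (A ** B) y) / 2"
    unfolding m_def D_def M_def .
qed


definition wt :: "nat \<Rightarrow> real" where "wt i = 1 / (real i + 1)^2"

lemma wt_pos: "wt i > 0" unfolding wt_def by simp

lemma wt_sum: "n \<ge> 2 \<Longrightarrow> (\<Sum>i<n. wt i) \<le> 7/4 - 1 / real n"
proof (induction n rule: nat_induct_at_least)
  case base then show ?case by (simp add: wt_def numeral_2_eq_2)
next
  case (Suc n)
  have "wt n = 1 / ((real n + 1) * (real n + 1))" unfolding wt_def power2_eq_square ..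
  also have "\<dots> \<le> 1 / (real n * (real n + 1))"
  proof -
    have pos: "0 < ((real n + 1) * (real n + 1)) * (real n * (real n + 1))" using Suc.hyps by simp
    show ?thesis by (rule divide_left_mono[OF _ _ pos]) (simp_all add: algebra_simps)
  qed
  also have "\<dots> = 1 / real n - 1 / (real n + 1)" using Suc.hyps by (simp add: field_simps)
  finally have "wt n \<le> 1 / real n - 1 / (real n + 1)" .
  then show ?case using Suc by (simp add: add.commute)
qed

lemma wt_sum': "(\<Sum>i\<le>n. wt i) \<le> 7/4"
proof (cases n)
  case 0 then show ?thesis by (simp add: wt_def)
next
  case (Suc m)
  have "(\<Sum>i\<le>n. wt i) = (\<Sum>i<Suc n. wt i)" by (simp add: lessThan_Suc_atMost)
  also have "\<dots> \<le> 7/4 - 1 / real (Suc n)" using Suc by (intro wt_sum) auto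
  also have "\<dots> \<le> 7/4" by simp
  finally show ?thesis .
qed

lemma pair_bound:
  fixes a b N :: real
  assumes "a \<ge> 1" "b \<ge> 1" "N > 0" "N \<le> a + b"
  shows "1 / (a^2 * b^2) \<le> (2 / a^2 + 2 / b^2) * (1 / N^2)"
proof -
  have "N^2 \<le> (a + b)^2" using assms by (intro power_mono) auto
  also have "\<dots> \<le> 2 * a^2 + 2 * b^2" by (simp add: power2_sum) (smt (verit) sum_squares_bound)
  finally have h: "N^2 \<le> 2 * a^2 + 2 * b^2" .
  have "(2 / a^2 + 2 / b^2) * (1 / N^2) = (2 * b^2 + 2 * a^2) / (a^2 * b^2 * N^2)"
    using assms by (simp add: field_simps)
  also have "\<dots> \<ge> N^2 / (a^2 * b^2 * N^2)"
    using h assms by (intro divide_right_mono) auto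
  moreover have "N^2 / (a^2 * b^2 * N^2) = 1 / (a^2 * b^2)" using assms by simp
  ultimately show ?thesis by simp
qed

lemma conv_bound:
  assumes "K' \<le> Suc K"
  shows "(\<Sum>i\<le>K. wt i * wt (K - i)) \<le> 7 * wt K'"
proof -
  have t: "wt i * wt (K - i) \<le> (2 * wt i + 2 * wt (K - i)) * wt K'" if "i \<le> K" for i
  proof -
    have "wt i * wt (K - i) = 1 / ((real i + 1)^2 * (real (K - i) + 1)^2)" unfolding wt_def by simp
    also have "\<dots> \<le> (2 / (real i + 1)^2 + 2 / (real (K - i) + 1)^2) * (1 / (real K' + 1)^2)"
      using assms that by (intro pair_bound) (auto simp: of_nat_diff)
    also have "\<dots> = (2 * wt i + 2 * wt (K - i)) * wt K'" unfolding wt_def by simp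
    finally show ?thesis .
  qed
  have "(\<Sum>i\<le>K. wt i * wt (K - i)) \<le> (\<Sum>i\<le>K. (2 * wt i + 2 * wt (K - i)) * wt K')"
    using t by (intro sum_mono) auto
  also have "\<dots> = (2 * (\<Sum>i\<le>K. wt i) + 2 * (\<Sum>i\<le>K. wt (K - i))) * wt K'"
    by (simp only: sum_distrib_right[symmetric] sum.distrib sum_distrib_left[symmetric])
  also have "\<dots> = 4 * (\<Sum>i\<le>K. wt i) * wt K'"
    by (simp add: sum_rev_atMost)
  also have "\<dots> \<le> 4 * (7/4) * wt K'"
    using wt_sum'[of K] wt_pos[of K'] by (intro mult_right_mono) auto
  finally show ?thesis by simp
qed

lemma c_bound:
  fixes p s :: nat
  assumes "p \<ge> 1" "s \<le> p"
  shows "(1 + 1 / real p)^s \<le> exp 1"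
proof -
  have "(1 + 1 / real p)^s \<le> (1 + 1 / real p)^p"
    using assms by (intro power_increasing) auto
  also have "\<dots> \<le> (exp (1 / real p))^p"
    by (intro power_mono) (auto simp: add.commute)
  also have "\<dots> = exp (real p * (1 / real p))" by (rule exp_of_nat_mult[symmetric])
  also have "\<dots> = exp 1" using assms by simp
  finally show ?thesis .
qed


lemma num_bound:
  fixes p s' k' n :: nat and \<gamma> :: real
  assumes p1: "p \<ge> 1" and sp: "Suc s' \<le> p" and g0: "0 < \<gamma>" and g1: "\<gamma> < 1/2"
    and Ln: "log 2 (real n) = real p"
  defines "c \<equiv> (1 + 1 / real p)^s' / 3"
  shows "max (c * epsi \<gamma> n (Suc k')) (c * epsi \<gamma> n (Suc k'))
           + (\<Sum>i\<le>Suc k'. (c * epsi \<gamma> n i) * (c * epsi \<gamma> n (Suc k' - i)))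
           + (\<Sum>i\<le>k'. (c * epsi \<gamma> n i) * (c * epsi \<gamma> n (k' - i)))
         \<le> (1 + 1 / real p)^(Suc s') / 3 * epsi \<gamma> n (Suc k')"
proof -
  define L where "L = real p"
  have L1: "L \<ge> 1" using p1 unfolding L_def by simp
  define K where "K = \<gamma> / (10 * L)"
  have K0: "K > 0" using g0 L1 unfolding K_def by simp
  have c0: "c > 0" unfolding c_def
    by (intro divide_pos_pos zero_less_power) (auto intro: add_pos_nonneg)
  have e: "epsi \<gamma> n i = K * \<gamma>^i * wt i" for i
    unfolding epsi_def Ln K_def wt_def L_def by (simp add: field_simps)
  define g where "g = \<gamma>^k'"
  have g0': "g > 0" using g0 unfolding g_def by simp
  define W where "W = wt (Suc k')"
  have W0: "W > 0" unfolding W_def by (rule wt_pos)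
  define S1 where "S1 = (\<Sum>i\<le>Suc k'. wt i * wt (Suc k' - i))"
  define S2 where "S2 = (\<Sum>i\<le>k'. wt i * wt (k' - i))"
  have S1b: "S1 \<le> 7 * W" unfolding S1_def W_def by (rule conv_bound) simp
  have S2b: "S2 \<le> 7 * W" unfolding S2_def W_def by (rule conv_bound) simp
  have Sig1: "(\<Sum>i\<le>Suc k'. (c * epsi \<gamma> n i) * (c * epsi \<gamma> n (Suc k' - i))) = (c * K)^2 * (\<gamma> * g) * S1"
  proof -
    have "(c * epsi \<gamma> n i) * (c * epsi \<gamma> n (Suc k' - i)) = (c * K)^2 * (\<gamma> * g) * (wt i * wt (Suc k' - i))"
      if "i \<le> Suc k'" for i
    proof -
      have "\<gamma>^i * \<gamma>^(Suc k' - i) = \<gamma> * g" unfolding g_def using that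
        by (simp add: power_add[symmetric])
      then show ?thesis unfolding e by (simp add: power2_eq_square algebra_simps)
    qed
    then show ?thesis unfolding S1_def sum_distrib_left by (intro sum.cong) auto
  qed
  have Sig2: "(\<Sum>i\<le>k'. (c * epsi \<gamma> n i) * (c * epsi \<gamma> n (k' - i))) = (c * K)^2 * g * S2"
  proof -
    have "(c * epsi \<gamma> n i) * (c * epsi \<gamma> n (k' - i)) = (c * K)^2 * g * (wt i * wt (k' - i))"
      if "i \<le> k'" for i
    proof -
      have "\<gamma>^i * \<gamma>^(k' - i) = g" unfolding g_def using that
        by (simp add: power_add[symmetric])
      then show ?thesis unfolding e by (simp add: power2_eq_square algebra_simps)
    qed
    then show ?thesis unfolding S2_def sum_distrib_left by (intro sum.cong) auto
  qed
  have ek: "epsi \<gamma> n (Suc k') = K * (\<gamma> * g) * W" unfolding e g_def W_def by simp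
  have cb: "c \<le> exp 1 / 3"
    unfolding c_def using c_bound[of p s'] p1 sp by (simp add: divide_right_mono)
  have c7: "c * (7 * (\<gamma> + 1)) / 10 \<le> 1"
  proof -
    have "c * (7 * (\<gamma> + 1)) \<le> (exp 1 / 3) * (7 * (\<gamma> + 1))"
      using cb g0 by (intro mult_right_mono) auto
    also have "\<dots> \<le> (272/100/3) * (7 * (1/2 + 1))"
      using e_less_272 g0 g1 by (intro mult_mono) auto
    finally show ?thesis by simp
  qed
  have "(c * K)^2 * (\<gamma> * g) * S1 + (c * K)^2 * g * S2 \<le> (c * K)^2 * (\<gamma> * g) * (7 * W) + (c * K)^2 * g * (7 * W)"
    using S1b S2b g0 g0' by (intro add_mono mult_left_mono) auto
  also have "\<dots> = (c * K * g * W) * (c * K * (7 * (\<gamma> + 1)))"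
    by (simp add: power2_eq_square algebra_simps)
  also have "\<dots> \<le> (c * K * g * W) * (\<gamma> / L)"
  proof (intro mult_left_mono)
    have "c * K * (7 * (\<gamma> + 1)) = (\<gamma> / L) * (c * (7 * (\<gamma> + 1)) / 10)"
      unfolding K_def by (simp add: field_simps)
    also have "\<dots> \<le> (\<gamma> / L) * 1"
      using c7 g0 L1 by (intro mult_left_mono) auto
    finally show "c * K * (7 * (\<gamma> + 1)) \<le> \<gamma> / L" by simp
    show "0 \<le> c * K * g * W" using c0 K0 g0' W0 by simp
  qed
  finally have main: "(c * K)^2 * (\<gamma> * g) * S1 + (c * K)^2 * g * S2 \<le> (c * K * g * W) * (\<gamma> / L)" .
  have rhs: "(1 + 1 / real p)^(Suc s') / 3 * epsi \<gamma> n (Suc k') = c * epsi \<gamma> n (Suc k') + (c * K * g * W) * (\<gamma> / L)"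
    unfolding c_def ek L_def by (simp add: field_simps)
  show ?thesis unfolding Sig1 Sig2 rhs using main by simp
qed


lemma sv_refl: "e \<ge> 0 \<Longrightarrow> dstoch W \<Longrightarrow> sv_approx e W W"
  unfolding sv_approx_def using Dq_nonneg Dq_nonneg_T by (auto intro!: mult_nonneg_nonneg add_nonneg_nonneg)

declare approxM.simps[simp del]

lemma epsi_pos: "0 < \<gamma> \<Longrightarrow> log 2 (real n) > 0 \<Longrightarrow> epsi \<gamma> n i > 0"
  unfolding epsi_def by simp

theorem lemma4p5:
  fixes B :: "nat \<Rightarrow> 'w::finite \<Rightarrow> bool \<Rightarrow> 'w" and n :: nat and \<gamma> :: real
    and M0 :: "nat \<Rightarrow> nat \<Rightarrow> real^'w^'w"
  assumes "regular_robp n B"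
    and "n \<ge> 2" and "\<exists>p. n = 2 ^ p"
    and "0 < \<gamma>" and "\<gamma> < 1/2"
    and "\<forall>(l, r)\<in>BS n. sv_approx (epsi \<gamma> n 0 / 3) (Mrange B l r) (M0 l r)"
  shows "\<forall>k. \<forall>(l, r)\<in>BS n.
           sv_approx (Ct n (log 2 (real (r - l))) * epsi \<gamma> n k) (Mrange B l r) (approxM M0 B k l r)"
proof -
  note reg = assms(1) and g0 = assms(4) and g1 = assms(5) and base = assms(6)
  obtain p where np: "n = 2 ^ p" using assms(3) by blast
  have p1: "p \<ge> 1" using assms(2) np by (cases p) auto
  have Ln: "log 2 (real n) = real p" unfolding np by simp
  have Lpos: "log 2 (real n) > 0" using Ln p1 by simp
  have ep: "epsi \<gamma> n i > 0" for i using epsi_pos[OF g0 Lpos] .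
  have Ct_eq: "Ct n (real s) = (1 + 1 / real p)^s / 3" for s
    unfolding Ct_def Ln by (simp add: powr_realpow add_pos_nonneg)
  have main: "\<forall>l r. (l, r) \<in> BS n \<longrightarrow> r - l = d \<longrightarrow>
      (\<forall>k. sv_approx (Ct n (log 2 (real (r - l))) * epsi \<gamma> n k) (Mrange B l r) (approxM M0 B k l r))" for d
  proof (induction d rule: less_induct)
    case (less d)
    show ?case
    proof (intro allI impI)
      fix l r k
      assume lrBS: "(l, r) \<in> BS n" and dd: "r - l = d"
      obtain i s where lr: "l = i * 2^s" "r = l + 2^s" "r \<le> n"
        using lrBS unfolding BS_def by auto
      have rl: "r - l = 2^s" using lr by simp
      have logs: "log 2 (real (r - l)) = real s" unfolding rl by simp
      have dW: "dstoch (Mrange B l r)" using dstoch_Mrange[OF reg lr(3)] .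
      have Ct_ge: "Ct n (real s) \<ge> 1/3"
        unfolding Ct_eq using p1 by (simp add: one_le_power)
      show "sv_approx (Ct n (log 2 (real (r - l))) * epsi \<gamma> n k) (Mrange B l r) (approxM M0 B k l r)"
      proof (cases k)
        case 0
        have "approxM M0 B k l r = M0 l r" using 0 by (subst approxM.simps) simp
        moreover have "sv_approx (epsi \<gamma> n 0 / 3) (Mrange B l r) (M0 l r)" using base lrBS by blast
        moreover have "epsi \<gamma> n 0 / 3 \<le> Ct n (real s) * epsi \<gamma> n 0"
          using Ct_ge ep[of 0] by (simp add: mult_right_mono)
        ultimately have "sv_approx (Ct n (real s) * epsi \<gamma> n 0) (Mrange B l r) (approxM M0 B k l r)"
          using sv_mono[OF _ _ dW] by simp
        then show ?thesis using 0 logs by simp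
      next
        case (Suc k')
        show ?thesis
        proof (cases s)
          case 0
          have rS: "r = Suc l" using lr 0 by simp
          have "approxM M0 B k l r = Mstep B r" using Suc rS by (subst approxM.simps) simp
          also have "\<dots> = Mrange B l r" unfolding rS by (rule Mrange_one[symmetric])
          finally show ?thesis using sv_refl[OF _ dW] Ct_ge ep[of k] logs by simp
        next
          case (Suc s')
          define m where "m = l + 2^s'"
          have rm: "r = m + 2^s'" unfolding m_def using lr Suc by simp
          have "l + r = 2 * m" unfolding rm m_def by simp
          then have mdiv: "(l + r) div 2 = m" by simp
          have "(1::nat) \<le> 2^s'" by simp
          then have nle: "\<not> r \<le> Suc l" unfolding rm m_def by linarith
          have l2: "l = (2 * i) * 2^s'" using lr Suc by simp
          have m2: "m = (2 * i + 1) * 2^s'" unfolding m_def l2 by (simp add: algebra_simps)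
          have mn: "m \<le> n" using lr rm by simp
          have lmBS: "(l, m) \<in> BS n" unfolding BS_def
          proof (simp only: mem_Collect_eq case_prod_conv, intro exI conjI)
            show "l = (2 * i) * 2^s'" by (rule l2)
            show "m = l + 2^s'" by (rule m_def)
            show "l < m" unfolding m_def by simp
            show "m \<le> n" by (rule mn)
          qed
          have mrBS: "(m, r) \<in> BS n" unfolding BS_def
          proof (simp only: mem_Collect_eq case_prod_conv, intro exI conjI)
            show "m = (2 * i + 1) * 2^s'" by (rule m2)
            show "r = m + 2^s'" by (rule rm)
            show "m < r" unfolding rm by simp
            show "r \<le> n" by (rule lr(3))
          qed
          have ml: "m - l = 2^s'" "r - m = 2^s'" unfolding rm m_def by simp_all
          have lt: "2^s' < d" unfolding dd[symmetric] rl Suc by simp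
          have IH1: "sv_approx (Ct n (real s') * epsi \<gamma> n j) (Mrange B l m) (approxM M0 B j l m)" for j
            using less.IH[OF lt, rule_format, OF lmBS ml(1), of j] unfolding ml(1) by simp
          have IH2: "sv_approx (Ct n (real s') * epsi \<gamma> n j) (Mrange B m r) (approxM M0 B j m r)" for j
            using less.IH[OF lt, rule_format, OF mrBS ml(2), of j] unfolding ml(2) by simp
          define c where "c = (1 + 1 / real p)^s' / 3"
          have c0: "c > 0" unfolding c_def
            by (intro divide_pos_pos zero_less_power) (auto intro: add_pos_nonneg)
          have ap: "approxM M0 B k l r = (\<Sum>j\<le>Suc k'. approxM M0 B j l m ** approxM M0 B (Suc k' - j) m r)
                      - (\<Sum>j\<le>k'. approxM M0 B j l m ** approxM M0 B (k' - j) m r)"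
            using \<open>k = Suc k'\<close> nle mdiv by (subst approxM.simps) (simp add: Let_def)
          have mr: "Mrange B l r = Mrange B l m ** Mrange B m r"
            by (rule Mrange_split) (simp_all add: m_def rm)
          have dl: "dstoch (Mrange B l m)" by (rule dstoch_Mrange[OF reg mn])
          have dr: "dstoch (Mrange B m r)" by (rule dstoch_Mrange[OF reg lr(3)])
          have st: "sv_approx (max (c * epsi \<gamma> n (Suc k')) (c * epsi \<gamma> n (Suc k'))
              + (\<Sum>j\<le>Suc k'. (c * epsi \<gamma> n j) * (c * epsi \<gamma> n (Suc k' - j)))
              + (\<Sum>j\<le>k'. (c * epsi \<gamma> n j) * (c * epsi \<gamma> n (k' - j))))
              (Mrange B l m ** Mrange B m r) (approxM M0 B k l r)"
            unfolding ap
            by (rule step_lemma[OF dl dr]) (use IH1 IH2 c0 ep in \<open>auto simp: Ct_eq c_def\<close>)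
          have sp: "Suc s' \<le> p"
          proof -
            have "(2::nat)^(Suc s') \<le> 2^p" using lr(3) np unfolding rm m_def Suc by simp
            then show ?thesis by (simp only: power_increasing_iff)
          qed
          have nb: "max (c * epsi \<gamma> n (Suc k')) (c * epsi \<gamma> n (Suc k'))
              + (\<Sum>j\<le>Suc k'. (c * epsi \<gamma> n j) * (c * epsi \<gamma> n (Suc k' - j)))
              + (\<Sum>j\<le>k'. (c * epsi \<gamma> n j) * (c * epsi \<gamma> n (k' - j)))
              \<le> Ct n (real s) * epsi \<gamma> n k"
            unfolding Ct_eq c_def \<open>s = Suc s'\<close> \<open>k = Suc k'\<close>
            by (rule num_bound[OF p1 sp g0 g1 Ln])
          show ?thesis using sv_mono[OF st nb] dW mr logs by simp
        qed
      qed
    qed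
  qed
  show ?thesis using main by blast
qed

end
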